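(* Let $m\ge 2$ and $n$ be positive integers and $\theta\in(0,1)$. Let $\bm{D}_0\in\mathbb{R}^{m\times m}$ have i.i.d. entries distributed $\mathcal{N}(0,1/m)$, let $\bm{X}_0\in\mathbb{R}^{m\times n}$ have i.i.d. entries distributed as $BG(\theta)$ (independent of $\bm{D}_0$), and let $\bm{Y}=\bm{D}_0\bm{X}_0$. Let $\Omega$ be the support of $\bm{X}_0$ and, for $i\in[m]$, $\Omega_i\subseteq[n]$ the support of the $i$-th row of $\bm{X}_0$, with $\Omega_i^c=[n]\setminus\Omega_i$. Consider the three conditions: (C1) $n\ge m+\frac{|\Omega|}{m}-1$; (C2) for all $i\in[m]$, $|\Omega_i^c|\ge m-1$; (C3) for all $i\in[m]$ and all $i'\ne i$ in $[m]$, there exists $j\in[n]$ with $(\bm{X}_0)_{i,j}=0$ and $(\bm{X}_0)_{i',j}\ne0$. Fix $\epsilon\in(0,1)$ and define $$n_1=\frac{m-1}{1-\theta}\left[1-\frac{\ln\epsilon}{4m(m-1)(1-\theta)}+\sqrt{\left(1-\frac{\ln\epsilon}{4m(m-1)(1-\theta)}\right)^{2}-1}\right],$$ $$n_2=\frac{m-1}{1-\theta}\left[1-\frac{\ln\epsilon-\ln m}{4(m-1)(1-\theta)}+\sqrt{\left(1-\frac{\ln\epsilon-\ln m}{4(m-1)(1-\theta)}\right)^{2}-1}\right],$$ $$n_3=\frac{\ln\epsilon-\ln m-\ln(m-1)}{\ln\left(1-\theta(1-\theta)\right)}.$$ Then for each $i\in\{1,2,3\}$, if $n\ge n_i$, condition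 (C$i$) holds with probability at least $1-\epsilon$. Moreover $n_1\le n_2$, so that if $n\ge\max(n_2,n_3)$, each of the three conditions (C1), (C2), (C3) holds with probability at least $1-\epsilon$.
   Context: $[n]=\{1,\dots,n\}$. A random variable $X$ is Bernoulli–Gaussian, $X\sim BG(\theta)$ with $\theta\in[0,1]$, if $X=W\cdot C$ where $W$ and $C$ are independent, $W$ is Bernoulli with parameter $\theta$ (i.e. $\Pr(W=1)=\theta$), and $C\sim\mathcal{N}(0,1)$. The support of a matrix or row vector is the set of indices of its nonzero entries. *)

theory Defs
  imports "HOL-Probability.Probability"
begin

text \<open>Matrices are indexed 0-based: rows i < m, columns j < n. A random matrix is a
  function on the index set {..<m} \<times> {..<n} (extensional, as in PiM).\<close>

definition idx :: "nat \<Rightarrow> nat \<Rightarrow> (nat \<times> nat) set" where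
  "idx m n = {..<m} \<times> {..<n}"

definition std_gauss :: "real measure" where
  "std_gauss = density lborel std_normal_density"

definition BG :: "real \<Rightarrow> real measure" where
  "BG \<theta> = distr (measure_pmf (bernoulli_pmf \<theta>) \<Otimes>\<^sub>M std_gauss) borel
              (\<lambda>(w, c). (if w then 1 else 0) * c)"

text \<open>Gaussian N(0, 1/m) (variance 1/m, standard deviation sqrt(1/m)).\<close>
definition gauss_var :: "real \<Rightarrow> real measure" where
  "gauss_var v = density lborel (normal_density 0 (sqrt v))"

definition DX_measure :: "nat \<Rightarrow> nat \<Rightarrow> real \<Rightarrow> ((nat \<times> nat \<Rightarrow> real) \<times> (nat \<times> nat \<Rightarrow> real)) measure" where
  "DX_measure m n \<theta> =
     (PiM (idx m m) (\<lambda>_. gauss_var (1 / real m))) \<Otimes>\<^sub>M (PiM (idx m n) (\<lambda>_. BG \<theta>))"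

definition supp :: "nat \<Rightarrow> nat \<Rightarrow> (nat \<times> nat \<Rightarrow> real) \<Rightarrow> (nat \<times> nat) set" where
  "supp m n X = {(i, j) \<in> idx m n. X (i, j) \<noteq> 0}"

definition row_supp :: "nat \<Rightarrow> (nat \<times> nat \<Rightarrow> real) \<Rightarrow> nat \<Rightarrow> nat set" where
  "row_supp n X i = {j \<in> {..<n}. X (i, j) \<noteq> 0}"

definition C1 :: "nat \<Rightarrow> nat \<Rightarrow> (nat \<times> nat \<Rightarrow> real) \<Rightarrow> bool" where
  "C1 m n X \<longleftrightarrow> real n \<ge> real m + real (card (supp m n X)) / real m - 1"

definition C2 :: "nat \<Rightarrow> nat \<Rightarrow> (nat \<times> nat \<Rightarrow> real) \<Rightarrow> bool" where
  "C2 m n X \<longleftrightarrow> (\<forall>i<m. card ({..<n} - row_supp n X i) \<ge> m - 1)"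

definition C3 :: "nat \<Rightarrow> nat \<Rightarrow> (nat \<times> nat \<Rightarrow> real) \<Rightarrow> bool" where
  "C3 m n X \<longleftrightarrow> (\<forall>i<m. \<forall>i'<m. i' \<noteq> i \<longrightarrow> (\<exists>j<n. X (i, j) = 0 \<and> X (i', j) \<noteq> 0))"

definition n1 :: "nat \<Rightarrow> real \<Rightarrow> real \<Rightarrow> real" where
  "n1 m \<theta> \<epsilon> = (let a = 1 - ln \<epsilon> / (4 * real m * (real m - 1) * (1 - \<theta>)) in
     (real m - 1) / (1 - \<theta>) * (a + sqrt (a\<^sup>2 - 1)))"

definition n2 :: "nat \<Rightarrow> real \<Rightarrow> real \<Rightarrow> real" where
  "n2 m \<theta> \<epsilon> = (let a = 1 - (ln \<epsilon> - ln (real m)) / (4 * (real m - 1) * (1 - \<theta>)) in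
     (real m - 1) / (1 - \<theta>) * (a + sqrt (a\<^sup>2 - 1)))"

definition n3 :: "nat \<Rightarrow> real \<Rightarrow> real \<Rightarrow> real" where
  "n3 m \<theta> \<epsilon> = (ln \<epsilon> - ln (real m) - ln (real m - 1)) / ln (1 - \<theta> * (1 - \<theta>))"

end

theory Submission
  imports Defs
begin


lemma prob_space_std_gauss: "prob_space std_gauss"
  unfolding std_gauss_def by (rule prob_space_normal_density) simp

lemma std_gauss_zero: "emeasure std_gauss {0} = 0"
proof -
  have "AE x in lborel. x \<in> {0::real} \<longrightarrow> ennreal (std_normal_density x) = 0"
    using AE_lborel_singleton[of 0] by (rule eventually_mono) auto
  then have "{0::real} \<in> null_sets (density lborel std_normal_density)"
    by (subst null_sets_density_iff) auto
  thus ?thesis unfolding std_gauss_def by auto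
qed

lemma sets_std_gauss[simp, measurable_cong]: "sets std_gauss = sets borel"
  unfolding std_gauss_def by simp

lemma BG_meas: "(\<lambda>(w, c). (if w then 1 else 0) * c) \<in> borel_measurable (measure_pmf (bernoulli_pmf \<theta>) \<Otimes>\<^sub>M std_gauss)"
  by measurable

lemma prob_space_BG: "prob_space (BG \<theta>)"
  unfolding BG_def
  by (intro prob_space.prob_space_distr prob_space_pair prob_space_measure_pmf prob_space_std_gauss BG_meas)

lemma fm_BG: "finite_measure (BG \<theta>)"
  using prob_space_BG[of \<theta>] by (simp add: prob_space_def)

lemma sets_BG[simp, measurable_cong]: "sets (BG \<theta>) = sets borel"
  unfolding BG_def by simp

lemma BG_nonzero:
  assumes "0 \<le> \<theta>" "\<theta> \<le> 1"
  shows "measure (BG \<theta>) (UNIV - {0}) = \<theta>"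
proof -
  interpret G: prob_space std_gauss by (rule prob_space_std_gauss)
  have pre: "(\<lambda>(w, c). (if w then 1 else 0) * c) -` (UNIV - {0::real}) \<inter> space (measure_pmf (bernoulli_pmf \<theta>) \<Otimes>\<^sub>M std_gauss)
     = {True} \<times> (UNIV - {0})"
    by (auto simp: space_pair_measure sets_eq_imp_space_eq[OF sets_std_gauss] split: if_splits)
  have g: "emeasure std_gauss (UNIV - {0}) = 1"
  proof -
    have "emeasure std_gauss (space std_gauss - {0}) = emeasure std_gauss (space std_gauss) - emeasure std_gauss {0}"
      by (rule emeasure_compl) (auto simp: std_gauss_zero sets_eq_imp_space_eq[OF sets_std_gauss])
    moreover have "space std_gauss = UNIV" by (simp add: sets_eq_imp_space_eq[OF sets_std_gauss])
    ultimately show ?thesis using G.emeasure_space_1 by (simp add: std_gauss_zero)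
  qed
  have "emeasure (BG \<theta>) (UNIV - {0}) = emeasure (measure_pmf (bernoulli_pmf \<theta>) \<Otimes>\<^sub>M std_gauss) ({True} \<times> (UNIV - {0}))"
    unfolding BG_def by (subst emeasure_distr[OF BG_meas]) (auto simp: pre)
  also have "\<dots> = emeasure (measure_pmf (bernoulli_pmf \<theta>)) {True} * emeasure std_gauss (UNIV - {0})"
    by (rule G.emeasure_pair_measure_Times) auto
  also have "\<dots> = ennreal \<theta>" using assms by (simp add: g emeasure_pmf_single)
  finally show ?thesis using assms by (simp add: measure_def)
qed

lemma prob_space_gauss_var: "v > 0 \<Longrightarrow> prob_space (gauss_var v)"
  unfolding gauss_var_def by (rule prob_space_normal_density) simp

lemma pair_snd_measure:
  assumes "prob_space D" "prob_space P" "{x \<in> space P. Q x} \<in> sets P"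
  shows "measure (D \<Otimes>\<^sub>M P) {z \<in> space (D \<Otimes>\<^sub>M P). Q (snd z)} = measure P {x \<in> space P. Q x}"
proof -
  interpret D: prob_space D by fact
  interpret P: prob_space P by fact
  have "{z \<in> space (D \<Otimes>\<^sub>M P). Q (snd z)} = space D \<times> {x \<in> space P. Q x}"
    by (auto simp: space_pair_measure)
  moreover have "emeasure (D \<Otimes>\<^sub>M P) (space D \<times> {x \<in> space P. Q x}) = emeasure D (space D) * emeasure P {x \<in> space P. Q x}"
    by (rule P.emeasure_pair_measure_Times) (auto simp: assms)
  ultimately show ?thesis by (simp add: measure_def D.emeasure_space_1)
qed

locale BGP =
  fixes I :: "'i set" and \<theta> :: real
  assumes finI: "finite I" and neI: "I \<noteq> {}" and th0: "0 \<le> \<theta>" and th1: "\<theta> \<le> 1"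
begin

definition "P = PiM I (\<lambda>_. BG \<theta>)"

sublocale prob_space P unfolding P_def by (intro prob_space_PiM prob_space_BG)
sublocale PP: product_prob_space "\<lambda>_. BG \<theta>" I
  by (simp add: product_prob_space_def product_sigma_finite_def prob_space_BG prob_space_imp_sigma_finite product_prob_space_axioms_def prob_space_BG)

lemma indep_coord: "indep_vars (\<lambda>_. borel) (\<lambda>k x. x k) I"
proof -
  have rv: "random_variable borel (\<lambda>x. x k)" if "k \<in> I" for k
    unfolding P_def using that by measurable
  have "distr P (\<Pi>\<^sub>M i\<in>I. borel) (\<lambda>x. \<lambda>i\<in>I. x i) = (\<Pi>\<^sub>M i\<in>I. distr P borel (\<lambda>x. x i))"
  proof -
    have "(\<Pi>\<^sub>M i\<in>I. distr P borel (\<lambda>x. x i)) = (\<Pi>\<^sub>M i\<in>I. BG \<theta>)"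
    proof (rule PiM_cong)
      fix i assume "i \<in> I"
      have "distr P borel (\<lambda>x. x i) = distr P (BG \<theta>) (\<lambda>x. x i)"
        by (rule distr_cong) auto
      also have "\<dots> = BG \<theta>" unfolding P_def
        by (rule distr_PiM_component) (auto simp: prob_space_BG \<open>i \<in> I\<close>)
      finally show "distr P borel (\<lambda>x. x i) = BG \<theta>" .
    qed simp
    moreover have "distr P (\<Pi>\<^sub>M i\<in>I. borel) (\<lambda>x. \<lambda>i\<in>I. x i) = distr P (\<Pi>\<^sub>M i\<in>I. BG \<theta>) (\<lambda>x. \<lambda>i\<in>I. x i)"
      by (rule distr_cong) (auto intro!: sets_PiM_cong)
    moreover have "distr P (\<Pi>\<^sub>M i\<in>I. BG \<theta>) (\<lambda>x. \<lambda>i\<in>I. x i) = (\<Pi>\<^sub>M i\<in>I. BG \<theta>)"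
      unfolding P_def by (rule PP.distr_PiM_restrict_finite) (auto simp: finI)
    ultimately show ?thesis by simp
  qed
  then show ?thesis using indep_vars_iff_distr_eq_PiM'[OF neI rv] by simp
qed

lemma prob_nz: "k \<in> I \<Longrightarrow> prob {x \<in> space P. x k \<noteq> 0} = \<theta>"
proof -
  assume k: "k \<in> I"
  have "emeasure P {x \<in> space P. x k \<in> UNIV - {0}} = emeasure (BG \<theta>) (UNIV - {0})"
    unfolding P_def by (rule PP.emeasure_PiM_Collect_single) (auto simp: k)
  then show ?thesis using BG_nonzero[OF th0 th1]
    by (simp add: measure_def)
qed

lemma prob_z_nz: "k \<in> I \<Longrightarrow> l \<in> I \<Longrightarrow> k \<noteq> l \<Longrightarrow> prob {x \<in> space P. x k = 0 \<and> x l \<noteq> 0} = (1 - \<theta>) * \<theta>"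
proof -
  assume k: "k \<in> I" and l: "l \<in> I" and kl: "k \<noteq> l"
  define A where "A = (\<lambda>i. if i = k then {0::real} else UNIV - {0})"
  have "{x \<in> space P. x k = 0 \<and> x l \<noteq> 0} = {x \<in> space (PiM I (\<lambda>_. BG \<theta>)). \<forall>i\<in>{k,l}. x i \<in> A i}"
    using kl by (auto simp: A_def P_def)
  moreover have "emeasure (PiM I (\<lambda>_. BG \<theta>)) {x \<in> space (PiM I (\<lambda>_. BG \<theta>)). \<forall>i\<in>{k,l}. x i \<in> A i} = (\<Prod>i\<in>{k,l}. emeasure (BG \<theta>) (A i))"
    by (rule PP.emeasure_PiM_Collect) (auto simp: k l A_def)
  moreover have "emeasure (BG \<theta>) {0} = ennreal (1 - \<theta>)"
  proof -
    interpret B: prob_space "BG \<theta>" by (rule prob_space_BG)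
    have sp: "space (BG \<theta>) = UNIV" by (simp add: sets_eq_imp_space_eq[OF sets_BG])
    have "measure (BG \<theta>) {0} = 1 - measure (BG \<theta>) (UNIV - {0})"
      using prob_space.prob_compl[OF prob_space_BG, of "{0}" \<theta>] sp by simp
    thus ?thesis using BG_nonzero[OF th0 th1] by (simp add: finite_measure.emeasure_eq_measure[OF fm_BG])
  qed
  moreover have "emeasure (BG \<theta>) (UNIV - {0}) = ennreal \<theta>"
    using BG_nonzero[OF th0 th1] by (simp add: finite_measure.emeasure_eq_measure[OF fm_BG])
  ultimately have "emeasure P {x \<in> space P. x k = 0 \<and> x l \<noteq> 0} = ennreal (1 - \<theta>) * ennreal \<theta>"
    using kl by (simp add: A_def P_def)
  also have "\<dots> = ennreal ((1 - \<theta>) * \<theta>)" using th0 th1 by (simp add: ennreal_mult)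
  finally show ?thesis using th0 th1 by (simp add: measure_def)
qed

end



lemma quad:
  fixes c k K L n a :: real
  assumes c: "c > 0" and k: "k > 0" and K: "K > 0" and L: "L \<ge> 0"
    and a: "a = 1 + L / (2 * K * k * c)"
    and n: "n \<ge> (k / c) * (a + sqrt (a\<^sup>2 - 1))"
  shows "n * c - k \<ge> 0" "K * (n * c - k)\<^sup>2 \<ge> n * L"
proof -
  define t where "t = n * c / k"
  have a1: "a \<ge> 1" using a c k K L by simp
  have s0: "sqrt (a\<^sup>2 - 1) \<ge> 0" using a1 by simp
  have nt: "n = t * k / c" using c k by (simp add: t_def)
  have "t \<ge> a + sqrt (a\<^sup>2 - 1)"
  proof -
    have "n * c / k \<ge> ((k / c) * (a + sqrt (a\<^sup>2 - 1))) * c / k"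
      using n c k by (intro divide_right_mono mult_right_mono) auto
    thus ?thesis using c k by (simp add: t_def)
  qed
  hence ta: "t - a \<ge> sqrt (a\<^sup>2 - 1)" by simp
  hence t1: "t \<ge> 1" using a1 s0 by linarith
  have "(t - a)\<^sup>2 \<ge> (sqrt (a\<^sup>2 - 1))\<^sup>2" using ta s0 by (intro power_mono) auto
  hence q: "t\<^sup>2 - 2 * a * t + 1 \<ge> 0" using a1 by (simp add: power2_eq_square algebra_simps)
  have "n * c - k = k * (t - 1)" using c k by (simp add: t_def field_simps)
  thus "n * c - k \<ge> 0" using k t1 by simp
  have "K * (n * c - k)\<^sup>2 = K * k\<^sup>2 * (t\<^sup>2 - 2 * t + 1)"
    using \<open>n * c - k = k * (t - 1)\<close> by (simp add: power2_eq_square algebra_simps)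
  also have "\<dots> \<ge> K * k\<^sup>2 * (2 * a * t - 2 * t)"
    using q K k by (intro mult_left_mono) auto
  also have "K * k\<^sup>2 * (2 * a * t - 2 * t) = (k * t / c) * (2 * K * k * c * (a - 1))"
    using c by (simp add: field_simps power2_eq_square)
  also have "2 * K * k * c * (a - 1) = L" using a c k K by (simp add: field_simps)
  also have "(k * t / c) * L = n * L" by (simp add: nt)
  finally show "K * (n * c - k)\<^sup>2 \<ge> n * L" .
qed



context BGP
begin

definition "Y k x = (if x k \<noteq> 0 then 1 else (0::real))"

lemma Y_eq: "Y = (\<lambda>i x. if x i \<noteq> 0 then 1 else 0)"
  by (intro ext) (simp add: Y_def)

lemma Y_meas[measurable]: "k \<in> I \<Longrightarrow> Y k \<in> borel_measurable P"
  unfolding Y_def P_def by measurable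

lemma exp_Y: "k \<in> I \<Longrightarrow> expectation (Y k) = \<theta>"
proof -
  assume k: "k \<in> I"
  have "expectation (Y k) = expectation (indicator {x \<in> space P. x k \<noteq> 0})"
    by (rule Bochner_Integration.integral_cong) (auto simp: Y_def)
  also have "\<dots> = prob {x \<in> space P. x k \<noteq> 0}"
    by (simp add: Int_absorb2)
  finally show ?thesis using prob_nz[OF k] by simp
qed

lemma hoeff:
  assumes J: "J \<subseteq> I" "J \<noteq> {}" and e: "e \<ge> 0"
  shows "prob {x \<in> space P. (\<Sum>k\<in>J. Y k x) \<ge> real (card J) * \<theta> + e} \<le> exp (-2 * e\<^sup>2 / real (card J))"
proof -
  have finJ: "finite J" using J finI finite_subset by blast
  interpret H: Hoeffding_ineq P J Y "\<lambda>_. 0" "\<lambda>_. 1" "\<Sum>k\<in>J. expectation (Y k)"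
  proof unfold_locales
    show "finite J" by fact
    have "indep_vars (\<lambda>_. borel) (\<lambda>i x. if x i \<noteq> 0 then 1 else (0::real)) I"
      by (rule indep_vars_compose2[OF indep_coord]) auto
    then show "indep_vars (\<lambda>_. borel) Y J"
      unfolding Y_eq using J(1) by (rule indep_vars_subset)
    show "AE x in P. Y i x \<in> {0..1}" if "i \<in> J" for i by (auto simp: Y_def)
  qed simp
  have mu: "(\<Sum>k\<in>J. expectation (Y k)) = real (card J) * \<theta>"
    using J by (simp add: exp_Y subsetD)
  have "(\<Sum>i\<in>J. ((1::real) - 0)\<^sup>2) = real (card J)" by simp
  moreover have "real (card J) > 0" using finJ J by (simp add: card_gt_0_iff)
  ultimately show ?thesis using H.Hoeffding_ineq_ge[OF e] by (simp add: mu)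
qed

end


locale BGmn = BGP "idx m n" \<theta> for m n :: nat and \<theta> :: real
begin

abbreviation "I \<equiv> idx m n"

lemma C1_bound:
  assumes m: "m \<ge> 2" and n: "n \<ge> 1" and th: "0 < \<theta>" "\<theta> < 1"
    and ep: "0 < \<epsilon>" "\<epsilon> < 1" and nn: "real n \<ge> n1 m \<theta> \<epsilon>"
  shows "{X \<in> space P. C1 m n X} \<in> sets P" "prob {X \<in> space P. C1 m n X} \<ge> 1 - \<epsilon>"
proof -
  define S where "S X = (\<Sum>k\<in>I. Y k X)" for X :: "nat \<times> nat \<Rightarrow> real"
  have card: "real (card (supp m n X)) = S X" for X
  proof -
    have "supp m n X = {k \<in> I. X k \<noteq> 0}" by (auto simp: supp_def idx_def)
    then have "real (card (supp m n X)) = (\<Sum>k\<in>{k\<in>I. X k \<noteq> 0}. 1)" by simp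
    also have "\<dots> = S X" unfolding S_def Y_def using sum.inter_filter[OF finI, of "\<lambda>_. 1::real" "\<lambda>k. X k \<noteq> 0"] by simp
    finally show ?thesis .
  qed
  have mpos: "real m > 0" using m by simp
  define T where "T = real m * (real n - real m + 1)"
  have eqC: "C1 m n X \<longleftrightarrow> S X \<le> T" for X
  proof -
    have "C1 m n X \<longleftrightarrow> real m + S X / real m - 1 \<le> real n" unfolding C1_def card[of X] by simp
    also have "\<dots> \<longleftrightarrow> S X / real m \<le> real n - real m + 1" by linarith
    also have "\<dots> \<longleftrightarrow> S X \<le> T" unfolding T_def using mpos by (simp add: pos_divide_le_eq mult.commute)
    finally show ?thesis .
  qed
  define F where "F = {X \<in> space P. S X > T}"
  have set_eq: "{X \<in> space P. C1 m n X} = space P - F"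
    unfolding F_def eqC by (auto simp: not_less)
  have meas_F: "F \<in> sets P" unfolding F_def S_def by measurable
  show "{X \<in> space P. C1 m n X} \<in> sets P" unfolding set_eq using meas_F by auto
  define c where "c = 1 - \<theta>"
  define k where "k = real m - 1"
  define L where "L = - ln \<epsilon>"
  define a where "a = 1 + L / (2 * (2 * real m) * k * c)"
  have c: "c > 0" using th by (simp add: c_def)
  have k: "k > 0" using m by (simp add: k_def)
  have L: "L \<ge> 0" using ep by (simp add: L_def)
  have "n1 m \<theta> \<epsilon> = (k / c) * (a + sqrt (a\<^sup>2 - 1))"
  proof -
    have "1 - ln \<epsilon> / (4 * real m * (real m - 1) * (1 - \<theta>)) = a"
      unfolding a_def L_def k_def c_def by (simp add: field_simps)
    thus ?thesis unfolding n1_def Let_def k_def c_def by simp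
  qed
  hence nn': "real n \<ge> (k / c) * (a + sqrt (a\<^sup>2 - 1))" using nn by simp
  have q1: "real n * c - k \<ge> 0" and q2: "(2 * real m) * (real n * c - k)\<^sup>2 \<ge> real n * L"
    using quad[OF c k _ L a_def nn'] mpos by auto
  define e where "e = real m * (real n * c - k)"
  have e0: "e \<ge> 0" using q1 mpos by (simp add: e_def)
  have cI: "card I = m * n" by (simp add: idx_def card_cartesian_product)
  have Ineq: "I \<subseteq> I" "I \<noteq> {}" using neI by auto
  define G where "G = {x \<in> space P. (\<Sum>k\<in>I. Y k x) \<ge> real (card I) * \<theta> + e}"
  have TG: "real (card I) * \<theta> + e = T"
    unfolding cI T_def e_def c_def k_def by (simp add: algebra_simps)
  have "F \<subseteq> G" unfolding F_def G_def S_def TG by auto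
  moreover have "G \<in> sets P" unfolding G_def by measurable
  ultimately have "prob F \<le> prob G" by (intro finite_measure_mono)
  also have "prob G \<le> exp (-2 * e\<^sup>2 / real (card I))"
    unfolding G_def by (rule hoeff[OF Ineq e0])
  also have "\<dots> \<le> exp (ln \<epsilon>)"
  proof -
    have npos: "real n > 0" using n by simp
    have "2 * e\<^sup>2 / real (card I) = (2 * real m) * (real n * c - k)\<^sup>2 / real n"
      unfolding e_def cI using mpos npos by (simp add: power2_eq_square field_simps)
    also have "\<dots> \<ge> L" using q2 npos by (simp add: pos_le_divide_eq mult.commute)
    finally have "-2 * e\<^sup>2 / real (card I) \<le> ln \<epsilon>" unfolding L_def by simp
    thus ?thesis by simp
  qed
  also have "\<dots> = \<epsilon>" using ep by simp
  finally have "prob F \<le> \<epsilon>" .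
  moreover have "prob (space P - F) = 1 - prob F" by (rule prob_compl[OF meas_F])
  ultimately show "prob {X \<in> space P. C1 m n X} \<ge> 1 - \<epsilon>" unfolding set_eq by simp
qed

lemma C2_bound:
  assumes m: "m \<ge> 2" and n: "n \<ge> 1" and th: "0 < \<theta>" "\<theta> < 1"
    and ep: "0 < \<epsilon>" "\<epsilon> < 1" and nn: "real n \<ge> n2 m \<theta> \<epsilon>"
  shows "{X \<in> space P. C2 m n X} \<in> sets P" "prob {X \<in> space P. C2 m n X} \<ge> 1 - \<epsilon>"
proof -
  define J where "J i = {i} \<times> {..<n}" for i :: nat
  define S where "S i X = (\<Sum>k\<in>J i. Y k X)" for i and X :: "nat \<times> nat \<Rightarrow> real"
  have JI: "J i \<subseteq> I" if "i < m" for i using that by (auto simp: J_def idx_def)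
  have cJ: "card (J i) = n" for i by (simp add: J_def card_cartesian_product)
  have Jne: "J i \<noteq> {}" for i using n by (simp add: J_def lessThan_empty_iff)
  have card: "real (card (row_supp n X i)) = S i X" for X i
  proof -
    have "real (card (row_supp n X i)) = (\<Sum>j\<in>{j\<in>{..<n}. X (i, j) \<noteq> 0}. 1)" by (simp add: row_supp_def)
    also have "\<dots> = (\<Sum>j<n. Y (i, j) X)"
      unfolding Y_def using sum.inter_filter[of "{..<n}" "\<lambda>_. 1::real" "\<lambda>j. X (i, j) \<noteq> 0"] by simp
    also have "\<dots> = S i X"
    proof -
      have "J i = (\<lambda>j. (i, j)) ` {..<n}" by (auto simp: J_def)
      thus ?thesis unfolding S_def by (simp add: sum.reindex inj_on_def)
    qed
    finally show ?thesis .
  qed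
  define T where "T = real n - real m + 1"
  have eqC: "C2 m n X \<longleftrightarrow> (\<forall>i<m. S i X \<le> T)" for X
  proof -
    have "card ({..<n} - row_supp n X i) \<ge> m - 1 \<longleftrightarrow> S i X \<le> T" for i
    proof -
      have sub: "row_supp n X i \<subseteq> {..<n}" by (auto simp: row_supp_def)
      hence le: "card (row_supp n X i) \<le> n" using card_mono[of "{..<n}"] by fastforce
      have "card ({..<n} - row_supp n X i) = n - card (row_supp n X i)"
        using sub by (simp add: card_Diff_subset finite_subset)
      hence "card ({..<n} - row_supp n X i) \<ge> m - 1 \<longleftrightarrow> card (row_supp n X i) + m \<le> n + 1"
        using le m by auto
      also have "\<dots> \<longleftrightarrow> real (card (row_supp n X i)) \<le> T" unfolding T_def by linarith
      finally show ?thesis unfolding card .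
    qed
    thus ?thesis unfolding C2_def by auto
  qed
  define F where "F i = {X \<in> space P. S i X > T}" for i
  have set_eq: "{X \<in> space P. C2 m n X} = space P - (\<Union>i<m. F i)"
    unfolding F_def eqC by (auto simp: not_less)
  have mS: "S i \<in> borel_measurable P" if "i < m" for i
    unfolding S_def using JI[OF that] by (intro borel_measurable_sum) (auto intro: Y_meas)
  have meas_F: "F i \<in> sets P" if "i < m" for i
    using mS[OF that] unfolding F_def by measurable
  have meas_U: "(\<Union>i<m. F i) \<in> sets P" using meas_F by auto
  show "{X \<in> space P. C2 m n X} \<in> sets P" unfolding set_eq using meas_U by auto
  define c where "c = 1 - \<theta>"
  define k where "k = real m - 1"
  define L where "L = ln (real m) - ln \<epsilon>"
  define a where "a = 1 + L / (2 * 2 * k * c)"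
  have mpos: "real m > 0" using m by simp
  have c: "c > 0" using th by (simp add: c_def)
  have k: "k > 0" using m by (simp add: k_def)
  have L: "L \<ge> 0" using ep m by (simp add: L_def)
  have "n2 m \<theta> \<epsilon> = (k / c) * (a + sqrt (a\<^sup>2 - 1))"
  proof -
    have D: "2 * 2 * k * c = 4 * (real m - 1) * (1 - \<theta>)" unfolding k_def c_def by simp
    have "L = - (ln \<epsilon> - ln (real m))" by (simp add: L_def)
    hence "1 - (ln \<epsilon> - ln (real m)) / (4 * (real m - 1) * (1 - \<theta>)) = a"
      unfolding a_def D by (simp add: minus_divide_left)
    thus ?thesis unfolding n2_def Let_def k_def c_def by simp
  qed
  hence nn': "real n \<ge> (k / c) * (a + sqrt (a\<^sup>2 - 1))" using nn by simp
  have q1: "real n * c - k \<ge> 0" and q2: "2 * (real n * c - k)\<^sup>2 \<ge> real n * L"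
    using quad[OF c k _ L a_def nn'] by auto
  define e where "e = real n * c - k"
  have e0: "e \<ge> 0" using q1 by (simp add: e_def)
  define G where "G i = {x \<in> space P. (\<Sum>k\<in>J i. Y k x) \<ge> real (card (J i)) * \<theta> + e}" for i
  have TG: "real (card (J i)) * \<theta> + e = T" for i
    unfolding cJ T_def e_def c_def k_def by (simp add: algebra_simps)
  have bnd: "prob (F i) \<le> exp (-2 * e\<^sup>2 / real n)" if i: "i < m" for i
  proof -
    have "F i \<subseteq> G i" unfolding F_def G_def S_def TG by auto
    moreover have "G i \<in> sets P" unfolding G_def using mS[OF i] unfolding S_def by measurable
    ultimately have "prob (F i) \<le> prob (G i)" by (intro finite_measure_mono)
    also have "prob (G i) \<le> exp (-2 * e\<^sup>2 / real (card (J i)))"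
      unfolding G_def by (rule hoeff[OF JI[OF i] Jne e0])
    finally show ?thesis by (simp add: cJ)
  qed
  have "prob (\<Union>i<m. F i) \<le> (\<Sum>i<m. prob (F i))"
    by (rule finite_measure_subadditive_finite) (auto simp: meas_F)
  also have "\<dots> \<le> (\<Sum>i<m. exp (-2 * e\<^sup>2 / real n))" by (rule sum_mono) (rule bnd, simp)
  also have "\<dots> = real m * exp (-2 * e\<^sup>2 / real n)" by simp
  also have "\<dots> \<le> real m * exp (ln \<epsilon> - ln (real m))"
  proof -
    have npos: "real n > 0" using n by simp
    have "2 * e\<^sup>2 / real n \<ge> L" using q2 npos unfolding e_def by (simp add: pos_le_divide_eq mult.commute)
    hence "-2 * e\<^sup>2 / real n \<le> ln \<epsilon> - ln (real m)" unfolding L_def by simp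
    thus ?thesis using mpos by simp
  qed
  also have "\<dots> = \<epsilon>" using ep mpos by (simp add: exp_diff)
  finally have "prob (\<Union>i<m. F i) \<le> \<epsilon>" .
  moreover have "prob (space P - (\<Union>i<m. F i)) = 1 - prob (\<Union>i<m. F i)" by (rule prob_compl[OF meas_U])
  ultimately show "prob {X \<in> space P. C2 m n X} \<ge> 1 - \<epsilon>" unfolding set_eq by simp
qed


lemma pair_fail:
  assumes i: "i < m" and i': "i' < m" and ii: "i \<noteq> i'" and n: "n \<ge> 1"
  defines "F \<equiv> {X \<in> space P. \<forall>j<n. \<not> (X (i, j) = 0 \<and> X (i', j) \<noteq> 0)}"
  shows "F \<in> sets P" "prob F = (1 - \<theta> * (1 - \<theta>)) ^ n"
proof -
  define K where "K j = {(i, j), (i', j)}" for j :: nat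
  define V where "V j \<omega> = restrict (\<lambda>k. \<omega> k) (K j)" for j and \<omega> :: "nat \<times> nat \<Rightarrow> real"
  define A where "A j = {f \<in> space (PiM (K j) (\<lambda>_. borel)). \<not> (f (i, j) = (0::real) \<and> f (i', j) \<noteq> 0)}" for j
  have KI: "K j \<subseteq> I" if "j \<in> {..<n}" for j using that i i' by (auto simp: K_def idx_def)
  have disj: "disjoint_family_on K {..<n}" by (auto simp: disjoint_family_on_def K_def)
  have ind: "indep_vars (\<lambda>j. PiM (K j) (\<lambda>_. borel)) V {..<n}"
    unfolding V_def by (rule indep_vars_restrict[OF indep_coord KI disj])
  have A: "A j \<in> sets (PiM (K j) (\<lambda>_. borel))" for j
  proof -
    have "(\<lambda>f. f (i, j)) \<in> borel_measurable (PiM (K j) (\<lambda>_. borel))"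
      by (rule measurable_component_singleton) (simp add: K_def)
    moreover have "(\<lambda>f. f (i', j)) \<in> borel_measurable (PiM (K j) (\<lambda>_. borel))"
      by (rule measurable_component_singleton) (simp add: K_def)
    ultimately show ?thesis unfolding A_def by measurable
  qed
  have Vrv: "V j \<in> measurable P (PiM (K j) (\<lambda>_. borel))" if "j \<in> {..<n}" for j
    using ind that unfolding indep_vars_def by auto
  have pre: "V j -` A j \<inter> space P = {X \<in> space P. \<not> (X (i, j) = 0 \<and> X (i', j) \<noteq> 0)}" if "j \<in> {..<n}" for j
  proof -
    have "V j X \<in> space (PiM (K j) (\<lambda>_. borel))" if "X \<in> space P" for X
      using measurable_space[OF Vrv[OF \<open>j \<in> {..<n}\<close>] that] .
    thus ?thesis by (auto simp: A_def V_def K_def)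
  qed
  have Fint: "F = (\<Inter>j\<in>{..<n}. V j -` A j \<inter> space P)"
  proof -
    have z: "(0::nat) \<in> {..<n}" using n by simp
    show ?thesis using z by (auto simp: pre F_def)
  qed
  have Vsets: "V j -` A j \<inter> space P \<in> sets P" if "j \<in> {..<n}" for j
    using measurable_sets[OF Vrv[OF that] A] .
  show "F \<in> sets P" unfolding Fint using Vsets n by (intro sets.finite_INT) (auto simp: lessThan_empty_iff)
  have pj: "prob (V j -` A j \<inter> space P) = 1 - \<theta> * (1 - \<theta>)" if j: "j \<in> {..<n}" for j
  proof -
    have ij: "(i, j) \<in> I" "(i', j) \<in> I" "(i, j) \<noteq> (i', j)" using i i' ii j by (auto simp: idx_def)
    have E: "{X \<in> space P. X (i, j) = 0 \<and> X (i', j) \<noteq> 0} \<in> sets P"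
      unfolding P_def using ij by measurable
    have "{X \<in> space P. \<not> (X (i, j) = 0 \<and> X (i', j) \<noteq> 0)} = space P - {X \<in> space P. X (i, j) = 0 \<and> X (i', j) \<noteq> 0}"
      by auto
    hence "prob (V j -` A j \<inter> space P) = 1 - prob {X \<in> space P. X (i, j) = 0 \<and> X (i', j) \<noteq> 0}"
      using pre[OF j] prob_compl[OF E] by simp
    thus ?thesis using prob_z_nz[OF ij] by (simp add: mult.commute)
  qed
  have "prob F = (\<Prod>j\<in>{..<n}. prob (V j -` A j \<inter> space P))"
    unfolding Fint using n by (intro indep_varsD[OF ind]) (auto simp: A lessThan_empty_iff)
  also have "\<dots> = (\<Prod>j\<in>{..<n}. 1 - \<theta> * (1 - \<theta>))" by (rule prod.cong) (auto simp: pj)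
  finally show "prob F = (1 - \<theta> * (1 - \<theta>)) ^ n" by simp
qed


lemma C3_bound:
  assumes m: "m \<ge> 2" and n: "n \<ge> 1" and th: "0 < \<theta>" "\<theta> < 1"
    and ep: "0 < \<epsilon>" "\<epsilon> < 1" and nn: "real n \<ge> n3 m \<theta> \<epsilon>"
  shows "{X \<in> space P. C3 m n X} \<in> sets P" "prob {X \<in> space P. C3 m n X} \<ge> 1 - \<epsilon>"
proof -
  define F where "F i i' = {X \<in> space P. \<forall>j<n. \<not> (X (i, j) = 0 \<and> X (i', j) \<noteq> 0)}" for i i'
  define q where "q = 1 - \<theta> * (1 - \<theta>)"
  have FS: "F i i' \<in> sets P" if "i < m" "i' < m" "i \<noteq> i'" for i i'
    using pair_fail(1)[OF that n] unfolding F_def .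
  have Fp: "prob (F i i') = q ^ n" if "i < m" "i' < m" "i \<noteq> i'" for i i'
    using pair_fail(2)[OF that n] unfolding F_def q_def .
  define U where "U = (\<Union>i<m. \<Union>i'\<in>{..<m} - {i}. F i i')"
  have set_eq: "{X \<in> space P. C3 m n X} = space P - U"
    unfolding U_def F_def C3_def by auto
  have US: "U \<in> sets P" unfolding U_def using FS by auto
  show "{X \<in> space P. C3 m n X} \<in> sets P" unfolding set_eq using US by auto
  have "prob U \<le> (\<Sum>i<m. prob (\<Union>i'\<in>{..<m} - {i}. F i i'))"
    unfolding U_def by (rule finite_measure_subadditive_finite) (use FS in auto)
  also have "\<dots> \<le> (\<Sum>i<m. \<Sum>i'\<in>{..<m} - {i}. prob (F i i'))"
    by (rule sum_mono, rule finite_measure_subadditive_finite) (use FS in auto)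
  also have "\<dots> = (\<Sum>i<m. \<Sum>i'\<in>{..<m} - {i}. q ^ n)"
    by (intro sum.cong refl) (auto simp: Fp)
  also have "\<dots> = real m * (real m - 1) * q ^ n"
  proof -
    have "card ({..<m} - {i}) = m - 1" if "i < m" for i using that by simp
    hence "(\<Sum>i<m. \<Sum>i'\<in>{..<m} - {i}. q ^ n) = (\<Sum>i<m. real (m - 1) * q ^ n)"
      by (intro sum.cong refl) simp
    thus ?thesis using m by (simp add: of_nat_diff)
  qed
  also have "\<dots> \<le> \<epsilon>"
  proof -
    have tp: "\<theta> * (1 - \<theta>) > 0" using th by simp
    have tl: "\<theta> * (1 - \<theta>) < 1" using th by (smt (verit) mult_left_le_one_le)
    have q0: "q > 0" and q1: "q < 1" using tp tl by (auto simp: q_def)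
    have lq: "ln q < 0" using q0 q1 by simp
    have "n3 m \<theta> \<epsilon> = (ln \<epsilon> - ln (real m) - ln (real m - 1)) / ln q"
      by (simp add: n3_def q_def)
    hence "(ln \<epsilon> - ln (real m) - ln (real m - 1)) / ln q \<le> real n" using nn by simp
    hence "real n * ln q \<le> ln \<epsilon> - ln (real m) - ln (real m - 1)"
      using lq by (simp add: divide_le_eq mult.commute)
    hence "ln (real m) + ln (real m - 1) + real n * ln q \<le> ln \<epsilon>" by simp
    hence "exp (ln (real m) + ln (real m - 1) + real n * ln q) \<le> exp (ln \<epsilon>)" by simp
    moreover have "exp (ln (real m) + ln (real m - 1) + real n * ln q) = real m * (real m - 1) * q ^ n"
    proof -
      have "exp (real n * ln q) = q ^ n" using q0 by (simp add: exp_of_nat_mult)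
      thus ?thesis using m by (simp add: exp_add)
    qed
    ultimately show ?thesis using ep by simp
  qed
  finally have "prob U \<le> \<epsilon>" .
  moreover have "prob (space P - U) = 1 - prob U" by (rule prob_compl[OF US])
  ultimately show "prob {X \<in> space P. C3 m n X} \<ge> 1 - \<epsilon>" unfolding set_eq by simp
qed

end


lemma n1_le_n2:
  assumes m: "m \<ge> 2" and th: "0 < \<theta>" "\<theta> < 1" and ep: "0 < \<epsilon>" "\<epsilon> < 1"
  shows "n1 m \<theta> \<epsilon> \<le> n2 m \<theta> \<epsilon>"
proof -
  define c where "c = 1 - \<theta>"
  define k where "k = real m - 1"
  define L where "L = - ln \<epsilon>"
  have c: "c > 0" using th by (simp add: c_def)
  have k: "k > 0" using m by (simp add: k_def)
  have L: "L > 0" using ep by (simp add: L_def)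
  have lm: "ln (real m) \<ge> 0" using m by simp
  define a1 where "a1 = 1 - ln \<epsilon> / (4 * real m * (real m - 1) * (1 - \<theta>))"
  define a2 where "a2 = 1 - (ln \<epsilon> - ln (real m)) / (4 * (real m - 1) * (1 - \<theta>))"
  have a1e: "a1 = 1 + L / (4 * k * c) / real m" unfolding a1_def L_def k_def c_def
    by (simp add: field_simps)
  have a2e: "a2 = 1 + (L + ln (real m)) / (4 * k * c)"
  proof -
    have D: "4 * k * c = 4 * (real m - 1) * (1 - \<theta>)" unfolding k_def c_def by simp
    have "L + ln (real m) = - (ln \<epsilon> - ln (real m))" by (simp add: L_def)
    thus ?thesis unfolding a2_def D by (simp add: minus_divide_left)
  qed
  have d: "4 * k * c > 0" using k c by simp
  have "L / (4 * k * c) / real m \<le> L / (4 * k * c)"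
    using m L d by (simp add: divide_le_eq_1 field_simps)
  also have "\<dots> \<le> (L + ln (real m)) / (4 * k * c)" using d lm by (simp add: divide_right_mono)
  finally have a12: "a1 \<le> a2" unfolding a1e a2e by simp
  have a1g: "a1 \<ge> 1" unfolding a1e using L d m by simp
  have "a1\<^sup>2 - 1 \<le> a2\<^sup>2 - 1" using a12 a1g by (simp add: power_mono)
  hence "sqrt (a1\<^sup>2 - 1) \<le> sqrt (a2\<^sup>2 - 1)" by (rule real_sqrt_le_mono)
  hence "a1 + sqrt (a1\<^sup>2 - 1) \<le> a2 + sqrt (a2\<^sup>2 - 1)" using a12 by (rule add_mono[rotated])
  moreover have "(real m - 1) / (1 - \<theta>) \<ge> 0" using k c unfolding k_def c_def by simp
  ultimately have "(real m - 1) / (1 - \<theta>) * (a1 + sqrt (a1\<^sup>2 - 1)) \<le> (real m - 1) / (1 - \<theta>) * (a2 + sqrt (a2\<^sup>2 - 1))"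
    by (rule mult_left_mono)
  thus ?thesis unfolding n1_def n2_def Let_def a1_def[symmetric] a2_def[symmetric] .
qed

theorem proposition3:
  fixes m n :: nat and \<theta> \<epsilon> :: real
  assumes "m \<ge> 2" and "n \<ge> 1" and "0 < \<theta>" and "\<theta> < 1" and "0 < \<epsilon>" and "\<epsilon> < 1"
  defines "M \<equiv> DX_measure m n \<theta>"
  shows "(real n \<ge> n1 m \<theta> \<epsilon> \<longrightarrow>
            measure M {DX \<in> space M. C1 m n (snd DX)} \<ge> 1 - \<epsilon>)
       \<and> (real n \<ge> n2 m \<theta> \<epsilon> \<longrightarrow>
            measure M {DX \<in> space M. C2 m n (snd DX)} \<ge> 1 - \<epsilon>)
       \<and> (real n \<ge> n3 m \<theta> \<epsilon> \<longrightarrow>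
            measure M {DX \<in> space M. C3 m n (snd DX)} \<ge> 1 - \<epsilon>)
       \<and> n1 m \<theta> \<epsilon> \<le> n2 m \<theta> \<epsilon>
       \<and> (real n \<ge> max (n2 m \<theta> \<epsilon>) (n3 m \<theta> \<epsilon>) \<longrightarrow>
            measure M {DX \<in> space M. C1 m n (snd DX)} \<ge> 1 - \<epsilon> \<and>
            measure M {DX \<in> space M. C2 m n (snd DX)} \<ge> 1 - \<epsilon> \<and>
            measure M {DX \<in> space M. C3 m n (snd DX)} \<ge> 1 - \<epsilon>)"
proof -
  note a = assms(1-6)
  interpret BGmn m n \<theta>
    by unfold_locales (use a in \<open>auto simp: idx_def finite_cartesian_product lessThan_empty_iff\<close>)
  define D where "D = PiM (idx m m) (\<lambda>_. gauss_var (1 / real m))"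
  have D: "prob_space D" unfolding D_def using a by (intro prob_space_PiM prob_space_gauss_var) auto
  have PS: "prob_space P" by (rule prob_space_axioms)
  have Meq: "M = D \<Otimes>\<^sub>M P" unfolding M_def DX_measure_def D_def P_def ..
  have red: "measure M {DX \<in> space M. Q (snd DX)} = prob {X \<in> space P. Q X}"
    if "{X \<in> space P. Q X} \<in> sets P" for Q
    unfolding Meq by (rule pair_snd_measure[OF D PS that])
  have r1: "measure M {DX \<in> space M. C1 m n (snd DX)} \<ge> 1 - \<epsilon>" if "real n \<ge> n1 m \<theta> \<epsilon>"
    using C1_bound[OF a that] red by simp
  have r2: "measure M {DX \<in> space M. C2 m n (snd DX)} \<ge> 1 - \<epsilon>" if "real n \<ge> n2 m \<theta> \<epsilon>"
    using C2_bound[OF a that] red by simp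
  have r3: "measure M {DX \<in> space M. C3 m n (snd DX)} \<ge> 1 - \<epsilon>" if "real n \<ge> n3 m \<theta> \<epsilon>"
    using C3_bound[OF a that] red by simp
  have le: "n1 m \<theta> \<epsilon> \<le> n2 m \<theta> \<epsilon>" using n1_le_n2 a by simp
  show ?thesis using r1 r2 r3 le by auto
qed


end
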